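(* Let $q$ be an acyclic Boolean conjunctive query. If each cycle in the attack graph of $q$ is terminal, then each cycle in the attack graph of $q$ has length $2$.
   Context: Atoms have variables or constants as arguments; each relation name has a signature $[n,k]$ with primary key positions $1,\dots,k$. $\mathit{key}(F)$ is the set of variables in the primary-key positions of atom $F$, $\mathit{vars}(F)$ its set of variables. A Boolean conjunctive query $q$ is a finite set of atoms; $\mathit{vars}(q)$ its variables. A join tree for $q$ is an undirected tree on the atoms of $q$ such that whenever a variable occurs in atoms $F$ and $G$ it occurs in every atom on the path between them; the edge between $F$ and $G$ is labeled $\mathit{vars}(F)\cap\mathit{vars}(G)$. $q$ is acyclic if it has a join tree. $\mathit{FD}(q)=\{\mathit{key}(F)\to\mathit{vars}(F)\mid F\in q\}$ and $F^{+,q}=\{x\in\mathit{vars}(q)\mid \mathit{FD}(q\setminus\{F\})\models\mathit{key}(F)\to x\}$. The attack graph of $q$, computed from any join tree $\tau$ (independent of the choice), has an edge $F\to G$ for distinct atoms iff every label $L$ on the path between $F$ and $G$ in $\tau$ satisfies $L\not\subseteq F^{+,q}$. A cycle of length $n$ is a sequence of edges $F_0\to\dots\to F_{n-1}\to F_0$ with pairwise distinct $F_i$; it is terminal if there is no edge from a vertex of the cycle to a vertex outside the cycle. *)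

theory Defs
  imports Main
begin

datatype ('v, 'c) qterm = Var 'v | Const 'c

datatype ('r, 'v, 'c) atom = Atom (rel: 'r) (args: "('v, 'c) qterm list")

(* A signature assigns to each relation name a pair (n, k): arity n,
   primary key positions 1..k. *)
type_synonym 'r signature = "'r \<Rightarrow> nat \<times> nat"

definition wf_atom :: "'r signature \<Rightarrow> ('r, 'v, 'c) atom \<Rightarrow> bool" where
  "wf_atom sig F \<longleftrightarrow> length (args F) = fst (sig (rel F)) \<and> 1 \<le> snd (sig (rel F))
                     \<and> snd (sig (rel F)) \<le> fst (sig (rel F))"

definition vars :: "('r, 'v, 'c) atom \<Rightarrow> 'v set" where
  "vars F = {x. Var x \<in> set (args F)}"

definition key :: "'r signature \<Rightarrow> ('r, 'v, 'c) atom \<Rightarrow> 'v set" where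
  "key sig F = {x. \<exists>i < snd (sig (rel F)). i < length (args F) \<and> args F ! i = Var x}"

definition qvars :: "('r, 'v, 'c) atom set \<Rightarrow> 'v set" where
  "qvars q = (\<Union>F\<in>q. vars F)"

definition bcq :: "'r signature \<Rightarrow> ('r, 'v, 'c) atom set \<Rightarrow> bool" where
  "bcq sig q \<longleftrightarrow> finite q \<and> (\<forall>F\<in>q. wf_atom sig F)"

(* Functional dependencies: pairs (X, Y) meaning X \<rightarrow> Y.
   Sigma \<Turnstile> X \<rightarrow> x  iff x lies in the attribute closure of X under Sigma. *)
inductive_set fd_closure :: "('v set \<times> 'v set) set \<Rightarrow> 'v set \<Rightarrow> 'v set"
  for \<Sigma> :: "('v set \<times> 'v set) set" and X :: "'v set" where
  base: "x \<in> X \<Longrightarrow> x \<in> fd_closure \<Sigma> X"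
| step: "(A, B) \<in> \<Sigma> \<Longrightarrow> (\<And>a. a \<in> A \<Longrightarrow> a \<in> fd_closure \<Sigma> X) \<Longrightarrow> y \<in> B \<Longrightarrow> y \<in> fd_closure \<Sigma> X"

definition FD :: "'r signature \<Rightarrow> ('r, 'v, 'c) atom set \<Rightarrow> ('v set \<times> 'v set) set" where
  "FD sig q = {(key sig F, vars F) | F. F \<in> q}"

definition plus_closure :: "'r signature \<Rightarrow> ('r, 'v, 'c) atom set \<Rightarrow> ('r, 'v, 'c) atom \<Rightarrow> 'v set" where
  "plus_closure sig q F = {x \<in> qvars q. x \<in> fd_closure (FD sig (q - {F})) (key sig F)}"

(* Undirected graphs: edges are two-element sets of vertices *)
definition is_path :: "'a set set \<Rightarrow> 'a \<Rightarrow> 'a \<Rightarrow> 'a list \<Rightarrow> bool" where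
  "is_path E a b p \<longleftrightarrow> p \<noteq> [] \<and> hd p = a \<and> last p = b \<and> distinct p \<and>
     (\<forall>i. Suc i < length p \<longrightarrow> {p ! i, p ! Suc i} \<in> E)"

definition is_tree :: "'a set \<Rightarrow> 'a set set \<Rightarrow> bool" where
  "is_tree V E \<longleftrightarrow> (\<forall>e\<in>E. \<exists>a b. e = {a, b} \<and> a \<noteq> b \<and> a \<in> V \<and> b \<in> V) \<and>
     (\<forall>a\<in>V. \<forall>b\<in>V. \<exists>!p. is_path E a b p)"

definition join_tree :: "('r, 'v, 'c) atom set \<Rightarrow> ('r, 'v, 'c) atom set set \<Rightarrow> bool" where
  "join_tree q E \<longleftrightarrow> is_tree q E \<and>
     (\<forall>F\<in>q. \<forall>G\<in>q. \<forall>p x. is_path E F G p \<longrightarrow> x \<in> vars F \<longrightarrow> x \<in> vars G \<longrightarrow>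
        (\<forall>H\<in>set p. x \<in> vars H))"

definition acyclic_query :: "('r, 'v, 'c) atom set \<Rightarrow> bool" where
  "acyclic_query q \<longleftrightarrow> (\<exists>E. join_tree q E)"

definition label :: "('r, 'v, 'c) atom \<Rightarrow> ('r, 'v, 'c) atom \<Rightarrow> 'v set" where
  "label F G = vars F \<inter> vars G"

definition attacks :: "'r signature \<Rightarrow> ('r, 'v, 'c) atom set \<Rightarrow> ('r, 'v, 'c) atom set set
                       \<Rightarrow> ('r, 'v, 'c) atom \<Rightarrow> ('r, 'v, 'c) atom \<Rightarrow> bool" where
  "attacks sig q E F G \<longleftrightarrow> F \<in> q \<and> G \<in> q \<and> F \<noteq> G \<and>
     (\<forall>p. is_path E F G p \<longrightarrow>
        (\<forall>i. Suc i < length p \<longrightarrow> \<not> (label (p ! i) (p ! Suc i) \<subseteq> plus_closure sig q F)))"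

definition is_cycle :: "('a \<Rightarrow> 'a \<Rightarrow> bool) \<Rightarrow> 'a list \<Rightarrow> bool" where
  "is_cycle att cs \<longleftrightarrow> cs \<noteq> [] \<and> distinct cs \<and>
     (\<forall>i < length cs. att (cs ! i) (cs ! ((Suc i) mod length cs)))"

definition terminal_cycle :: "('a \<Rightarrow> 'a \<Rightarrow> bool) \<Rightarrow> 'a list \<Rightarrow> bool" where
  "terminal_cycle att cs \<longleftrightarrow> is_cycle att cs \<and>
     (\<forall>F\<in>set cs. \<forall>G. att F G \<longrightarrow> G \<in> set cs)"

end

theory Submission
  imports Defs
begin

fun walk :: "'a set set \<Rightarrow> 'a list \<Rightarrow> bool" where
  "walk E [] = False"
| "walk E [x] = True"
| "walk E (x # y # xs) = ({x, y} \<in> E \<and> walk E (y # xs))"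

lemma walk_iff: "walk E p \<longleftrightarrow> p \<noteq> [] \<and> (\<forall>i. Suc i < length p \<longrightarrow> {p!i, p!Suc i} \<in> E)"
proof (induction E p rule: walk.induct)
  case (3 E x y xs)
  show ?case
  proof
    assume "walk E (x # y # xs)"
    then show "x # y # xs \<noteq> [] \<and> (\<forall>i. Suc i < length (x # y # xs) \<longrightarrow> {(x # y # xs) ! i, (x # y # xs) ! Suc i} \<in> E)"
      using 3 by (auto simp: less_Suc_eq_0_disj)
  next
    assume h: "x # y # xs \<noteq> [] \<and> (\<forall>i. Suc i < length (x # y # xs) \<longrightarrow> {(x # y # xs) ! i, (x # y # xs) ! Suc i} \<in> E)"
    have "{x,y} \<in> E" using h[THEN conjunct2, rule_format, of 0] by simp
    moreover have "\<forall>i. Suc i < length (y # xs) \<longrightarrow> {(y # xs) ! i, (y # xs) ! Suc i} \<in> E"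
    proof (intro allI impI)
      fix i assume "Suc i < length (y # xs)"
      then show "{(y # xs) ! i, (y # xs) ! Suc i} \<in> E"
        using h[THEN conjunct2, rule_format, of "Suc i"] by simp
    qed
    ultimately show "walk E (x # y # xs)" using 3 by simp
  qed
qed auto

lemma path_walk: "is_path E a b p \<longleftrightarrow> walk E p \<and> hd p = a \<and> last p = b \<and> distinct p"
  by (auto simp: is_path_def walk_iff)

lemma walk_append: "walk E (xs @ y # ys) \<longleftrightarrow> walk E (xs @ [y]) \<and> walk E (y # ys)"
proof (induction xs)
  case Nil then show ?case by simp
next
  case (Cons a xs)
  then show ?case by (cases xs) auto
qed

lemma walk_to_path: "walk E p \<Longrightarrow> \<exists>p'. is_path E (hd p) (last p) p'"
proof (induction "length p" arbitrary: p rule: less_induct)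
  case less
  show ?case
  proof (cases "distinct p")
    case True then show ?thesis using less.prems by (auto simp: path_walk)
  next
    case False
    then obtain xs ys zs y where p: "p = xs @ [y] @ ys @ [y] @ zs"
      using not_distinct_decomp[OF False] by blast
    have w0: "walk E (xs @ y # (ys @ y # zs))" using less.prems p by simp
    have w1: "walk E (xs @ [y])" and w2: "walk E (y # ys @ y # zs)"
      using w0 walk_append[of E xs y "ys @ y # zs"] by simp_all
    have "walk E ((y # ys) @ y # zs)" using w2 by simp
    then have "walk E (y # zs)" using walk_append[of E "y # ys" y zs] by blast
    then have w: "walk E (xs @ y # zs)" using w1 walk_append[of E xs y zs] by blast
    have "length (xs @ y # zs) < length p" using p by simp
    then obtain p' where "is_path E (hd (xs @ y # zs)) (last (xs @ y # zs)) p'"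
      using less.hyps w by blast
    moreover have "hd (xs @ y # zs) = hd p" using p by (cases xs) auto
    moreover have "last (xs @ y # zs) = last p" using p by (cases zs) auto
    ultimately show ?thesis by auto
  qed
qed

lemma walk_rev: "walk E p \<Longrightarrow> walk E (rev p)"
proof (induction E p rule: walk.induct)
  case (3 E x y xs)
  have "walk E (rev xs @ [y])" using 3 by simp
  moreover have "walk E [y, x]" using 3 by (simp add: insert_commute)
  ultimately show ?case using walk_append[of E "rev xs" y "[x]"] by simp
qed auto

lemma path_rev: "is_path E a b p \<Longrightarrow> is_path E b a (rev p)"
  using walk_rev by (auto simp: path_walk hd_rev last_rev)

lemma path_take: "is_path E a b p \<Longrightarrow> n < length p \<Longrightarrow> is_path E a (p!n) (take (Suc n) p)"
proof -
  assume p: "is_path E a b p" and n: "n < length p"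
  have l: "length (take (Suc n) p) = Suc n" using n by simp
  have "last (take (Suc n) p) = p!n"
    using n by (simp add: take_Suc_conv_app_nth)
  moreover have "take (Suc n) p \<noteq> []" using n by (cases p) auto
  moreover have "hd (take (Suc n) p) = a" using p n by (cases p) (auto simp: is_path_def)
  moreover have "distinct (take (Suc n) p)" using p by (simp add: is_path_def)
  moreover have "\<forall>i. Suc i < length (take (Suc n) p) \<longrightarrow>
      {take (Suc n) p ! i, take (Suc n) p ! Suc i} \<in> E"
  proof (intro allI impI)
    fix i assume i: "Suc i < length (take (Suc n) p)"
    have i1: "Suc i < length p" using i by simp
    have i2: "Suc i < Suc n" using i by simp
    have "{p ! i, p ! Suc i} \<in> E" using p i1 unfolding is_path_def by blast
    moreover have "take (Suc n) p ! i = p ! i" using i2 by (simp add: nth_take)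
    moreover have "take (Suc n) p ! Suc i = p ! Suc i" using i2 by (simp add: nth_take)
    ultimately show "{take (Suc n) p ! i, take (Suc n) p ! Suc i} \<in> E" by simp
  qed
  ultimately show ?thesis unfolding is_path_def by blast
qed

lemma path_mono: "is_path E' a b p \<Longrightarrow> E' \<subseteq> E \<Longrightarrow> is_path E a b p"
  unfolding is_path_def by blast

lemma path_remove: "is_path E a b p \<Longrightarrow> (\<forall>k. Suc k < length p \<longrightarrow> {p!k, p!Suc k} \<noteq> e)
  \<Longrightarrow> is_path (E - {e}) a b p"
  unfolding is_path_def by blast

lemma path_avoid: "is_path (E - {e}) a b p \<Longrightarrow> Suc k < length p \<Longrightarrow> {p!k, p!Suc k} \<noteq> e"
  unfolding is_path_def by blast

lemma path_concat: "is_path E a b p \<Longrightarrow> is_path E b c r \<Longrightarrow> \<exists>p'. is_path E a c p'"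
proof -
  assume p: "is_path E a b p" and r: "is_path E b c r"
  have pn: "p \<noteq> []" and lp: "last p = b" and hp: "hd p = a"
    using p unfolding is_path_def by blast+
  have wp: "walk E p" using p unfolding path_walk by blast
  have rn: "r \<noteq> []" and hr: "hd r = b" and lr: "last r = c"
    using r unfolding is_path_def by blast+
  have wr: "walk E r" using r unfolding path_walk by blast
  have p': "p = butlast p @ [b]" using pn lp append_butlast_last_id[OF pn] by simp
  have r': "r = b # tl r" using rn hr list.collapse[OF rn] by simp
  define xs where "xs = butlast p"
  define ys where "ys = tl r"
  have p': "p = xs @ [b]" using p' xs_def by simp
  have r': "r = b # ys" using r' ys_def by simp
  have "walk E (xs @ [b])" using wp p' by simp
  moreover have "walk E (b # ys)" using wr r' by simp
  ultimately have w: "walk E (xs @ b # ys)" using walk_append[of E xs b ys] by simp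
  have "hd (xs @ b # ys) = a" using hp p' by (cases xs) simp_all
  moreover have "last (xs @ b # ys) = c" using lr r' by (cases ys) simp_all
  ultimately show ?thesis using walk_to_path[OF w] by simp
qed

lemma tree_unique: "is_tree V E \<Longrightarrow> a \<in> V \<Longrightarrow> b \<in> V \<Longrightarrow> is_path E a b p1 \<Longrightarrow> is_path E a b p2 \<Longrightarrow> p1 = p2"
  unfolding is_tree_def by blast

lemma tree_exists: "is_tree V E \<Longrightarrow> a \<in> V \<Longrightarrow> b \<in> V \<Longrightarrow> \<exists>p. is_path E a b p"
  unfolding is_tree_def by blast

lemma path_in_V: "is_tree V E \<Longrightarrow> is_path E a b p \<Longrightarrow> a \<in> V \<Longrightarrow> set p \<subseteq> V"
proof
  fix x assume t: "is_tree V E" and p: "is_path E a b p" and a: "a \<in> V" and x: "x \<in> set p"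
  then obtain k where k: "k < length p" "p!k = x" by (auto simp: in_set_conv_nth)
  show "x \<in> V"
  proof (cases k)
    case 0 then show ?thesis using p k a by (auto simp: is_path_def hd_conv_nth)
  next
    case (Suc m)
    then have "{p!m, p!k} \<in> E" using p k by (auto simp: is_path_def)
    then obtain c d where "{p!m, p!k} = {c,d}" "c \<in> V" "d \<in> V" using t by (auto simp: is_tree_def)
    then show ?thesis using k by (auto simp: doubleton_eq_iff)
  qed
qed

lemma label_sym: "label a b = label b a" by (auto simp: label_def)

lemma label_eq: "{a,b} = {c,d} \<Longrightarrow> label a b = label c d"
  by (auto simp: doubleton_eq_iff label_def)

lemma key_sub_vars: "key sig F \<subseteq> vars F"
proof
  fix x assume "x \<in> key sig F"
  then obtain i where i: "i < length (args F)" "args F ! i = Var x" unfolding key_def by auto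
  have "Var x \<in> set (args F)" using nth_mem[OF i(1)] i(2) by simp
  then show "x \<in> vars F" unfolding vars_def by simp
qed

lemma key_lemma:
  assumes jt: "join_tree q E" and Fq: "F \<in> q" and Gq: "G \<in> q" and Hq: "H \<in> q"
    and dFG: "F \<noteq> G" and dGH: "G \<noteq> H" and dFH: "F \<noteq> H"
    and aFG: "attacks sig q E F G" and aGH: "attacks sig q E G H"
    and naFH: "\<not> attacks sig q E F H"
  shows "attacks sig q E G F"
proof (rule ccontr)
  assume naGF: "\<not> attacks sig q E G F"
  have tree: "is_tree q E" using jt unfolding join_tree_def by (rule conjunct1)
  have jv0: "\<forall>F\<in>q. \<forall>G\<in>q. \<forall>p x. is_path E F G p \<longrightarrow> x \<in> vars F \<longrightarrow> x \<in> vars G \<longrightarrow>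
        (\<forall>H\<in>set p. x \<in> vars H)"
    using jt unfolding join_tree_def by (rule conjunct2)
  have jv: "\<And>K1 K2 p x H'. K1 \<in> q \<Longrightarrow> K2 \<in> q \<Longrightarrow> is_path E K1 K2 p \<Longrightarrow> x \<in> vars K1
        \<Longrightarrow> x \<in> vars K2 \<Longrightarrow> H' \<in> set p \<Longrightarrow> x \<in> vars H'"
  proof -
    fix K1 K2 p x H' assume "K1 \<in> q" "K2 \<in> q" "is_path E K1 K2 p" "x \<in> vars K1" "x \<in> vars K2" "H' \<in> set p"
    then show "x \<in> vars H'" using jv0 by blast
  qed
  define S where "S = plus_closure sig q F"
  define T where "T = plus_closure sig q G"
  define S0 where "S0 = fd_closure (FD sig (q - {F})) (key sig F)"
  define T0 where "T0 = fd_closure (FD sig (q - {G})) (key sig G)"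
  have S_S0: "S \<subseteq> S0" unfolding S_def S0_def plus_closure_def by blast
  have T_T0: "T \<subseteq> T0" unfolding T_def T0_def plus_closure_def by blast
  have S_def': "S = {x \<in> qvars q. x \<in> S0}" unfolding S_def S0_def plus_closure_def by blast
  have T_def': "T = {x \<in> qvars q. x \<in> T0}" unfolding T_def T0_def plus_closure_def by blast
  have varsq: "\<And>K. K \<in> q \<Longrightarrow> vars K \<subseteq> qvars q" unfolding qvars_def by blast
  have attFG: "\<And>p k. is_path E F G p \<Longrightarrow> Suc k < length p \<Longrightarrow> \<not> label (p!k) (p!Suc k) \<subseteq> S"
    using aFG unfolding attacks_def S_def by blast
  have attGH: "\<And>p k. is_path E G H p \<Longrightarrow> Suc k < length p \<Longrightarrow> \<not> label (p!k) (p!Suc k) \<subseteq> T"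
    using aGH unfolding attacks_def T_def by blast
  obtain pGF i where pGF: "is_path E G F pGF" and i: "Suc i < length pGF"
    and iT: "label (pGF!i) (pGF!Suc i) \<subseteq> T"
    using naGF Fq Gq dFG unfolding attacks_def T_def by blast
  obtain p2 j where p2: "is_path E F H p2" and j: "Suc j < length p2"
    and jS: "label (p2!j) (p2!Suc j) \<subseteq> S"
    using naFH Fq Hq dFH unfolding attacks_def S_def by blast
  define A1 where "A1 = pGF!i"
  define A2 where "A2 = pGF!Suc i"
  define B1 where "B1 = p2!j"
  define B2 where "B2 = p2!Suc j"
  define e' where "e' = {A1, A2}"
  define e where "e = {B1, B2}"
  define E' where "E' = E - {e'}"
  define C where "C = {K \<in> q. \<exists>p. is_path E' F K p}"
  have LT: "label A1 A2 \<subseteq> T" using iT A1_def A2_def by simp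
  have LS: "label B1 B2 \<subseteq> S" using jS B1_def B2_def by simp
  obtain pFG where pFG: "is_path E F G pFG" using tree_exists[OF tree Fq Gq] by blast
  obtain pGH where pGH: "is_path E G H pGH" using tree_exists[OF tree Gq Hq] by blast
  have E'E: "E' \<subseteq> E" unfolding E'_def by blast
  have "is_path E' F F [F]" by (simp add: is_path_def)
  then have FC: "F \<in> C" unfolding C_def using Fq by blast
  have Cq: "C \<subseteq> q" unfolding C_def by blast
  have keyG: "\<not> key sig G \<subseteq> S0"
  proof
    assume kG: "key sig G \<subseteq> S0"
    have fdG: "(key sig G, vars G) \<in> FD sig (q - {F})" unfolding FD_def
      using Gq dFG by auto
    have vG: "vars G \<subseteq> S0"
    proof
      fix y assume y: "y \<in> vars G"
      show "y \<in> S0" unfolding S0_def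
        by (rule fd_closure.step[OF fdG _ y]) (use kG in \<open>auto simp: S0_def\<close>)
    qed
    have len: "2 \<le> length pFG"
    proof (rule ccontr)
      assume "\<not> 2 \<le> length pFG"
      moreover have "pFG \<noteq> []" using pFG by (simp add: is_path_def)
      moreover have "length pFG \<noteq> 0" using \<open>pFG \<noteq> []\<close> by simp
      ultimately have "length pFG = 1" by linarith
      then obtain a where "pFG = [a]" by (metis One_nat_def length_0_conv length_Suc_conv)
      then have "hd pFG = last pFG" by simp
      then show False using pFG dFG unfolding is_path_def by metis
    qed
    define k where "k = length pFG - 2"
    have k1: "Suc k < length pFG" using len k_def by simp
    have sk: "Suc k = length pFG - 1" using len k_def by simp
    have pne: "pFG \<noteq> []" using len by auto
    have "pFG ! Suc k = last pFG" using pne sk by (simp add: last_conv_nth)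
    then have lk: "pFG ! Suc k = G" using pFG by (simp add: is_path_def)
    have "label (pFG!k) (pFG!Suc k) \<subseteq> vars G" unfolding lk label_def by (rule Int_lower2)
    also have "vars G \<subseteq> S" using vG varsq[OF Gq] unfolding S_def' by blast
    finally have "label (pFG!k) (pFG!Suc k) \<subseteq> S" .
    then show False using attFG[OF pFG k1] by blast
  qed
  have inC_avoid: "{p!k, p!Suc k} \<noteq> e'"
    if KC: "K \<in> C" and Kp: "is_path E F K p" and kl: "Suc k < length p" for K p k
  proof -
    obtain r where r: "is_path E' F K r" using KC unfolding C_def by blast
    have Kq: "K \<in> q" using KC Cq by blast
    have "r = p" using tree_unique[OF tree Fq Kq path_mono[OF r E'E] Kp] .
    have "is_path (E - {e'}) F K p" using r \<open>r = p\<close> unfolding E'_def by simp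
    from path_avoid[OF this kl] show ?thesis .
  qed
  have GC: "G \<notin> C"
  proof
    assume "G \<in> C"
    then obtain r where r: "is_path E' F G r" unfolding C_def by blast
    have "rev r = pGF"
      using tree_unique[OF tree Gq Fq path_mono[OF path_rev[OF r] E'E] pGF] .
    then have "is_path E' G F pGF" using path_rev[OF r] by simp
    then have "is_path (E - {e'}) G F pGF" unfolding E'_def .
    from path_avoid[OF this i] show False unfolding e'_def A1_def A2_def by simp
  qed
  have pGH': "is_path E' G H pGH"
    unfolding E'_def
  proof (rule path_remove[OF pGH], intro allI impI notI)
    fix k assume k: "Suc k < length pGH" and eq: "{pGH!k, pGH!Suc k} = e'"
    have "{pGH!k, pGH!Suc k} = {A1, A2}" using eq e'_def by simp
    then have "label (pGH!k) (pGH!Suc k) = label A1 A2" by (rule label_eq)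
    then show False using attGH[OF pGH k] LT by simp
  qed
  have HC: "H \<notin> C"
  proof
    assume "H \<in> C"
    then obtain r where r: "is_path E' F H r" unfolding C_def by blast
    obtain r' where "is_path E' F G r'" using path_concat[OF r path_rev[OF pGH']] by blast
    then have "G \<in> C" using Gq unfolding C_def by blast
    then show False using GC by blast
  qed
  have cross: "\<exists>i. Suc i < length p \<and> {p!i, p!Suc i} = e' \<and> p!i \<in> C \<and> p!Suc i \<notin> C
        \<and> is_path E F (p!i) (take (Suc i) p)"
    if "is_path E F b p" "b \<notin> C" for p b
  proof -
    have ex: "\<exists>i. Suc i < length p \<and> {p!i, p!Suc i} = e'"
    proof (rule ccontr)
      assume "\<not> ?thesis"
      then have "\<forall>k. Suc k < length p \<longrightarrow> {p!k, p!Suc k} \<noteq> e'" by blast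
      from path_remove[OF that(1) this] have pe: "is_path E' F b p" unfolding E'_def .
      have "p \<noteq> []" "last p = b" using that(1) unfolding is_path_def by blast+
      then have "b \<in> set p" by (metis last_in_set)
      then have "b \<in> q" using path_in_V[OF tree that(1) Fq] by blast
      then have "b \<in> C" using pe unfolding C_def by blast
      then show False using that(2) by blast
    qed
    then obtain i where i: "Suc i < length p" "{p!i, p!Suc i} = e'"
      and min: "\<forall>m<i. \<not> (Suc m < length p \<and> {p!m, p!Suc m} = e')"
      using exists_least_iff[THEN iffD1, OF ex] by blast
    have tp: "is_path E F (p!i) (take (Suc i) p)" using path_take[OF that(1)] i by simp
    have "\<forall>k. Suc k < length (take (Suc i) p) \<longrightarrow> {take (Suc i) p ! k, take (Suc i) p ! Suc k} \<noteq> e'"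
    proof (intro allI impI)
      fix k assume k: "Suc k < length (take (Suc i) p)"
      then have k1: "k < i" by simp
      have "take (Suc i) p ! k = p ! k" using k1 by simp
      moreover have "take (Suc i) p ! Suc k = p ! Suc k" using k1 by simp
      moreover have "Suc k < length p" using k1 i(1) by simp
      ultimately show "{take (Suc i) p ! k, take (Suc i) p ! Suc k} \<noteq> e'" using min k1 by simp
    qed
    from path_remove[OF tp this] have "is_path E' F (p!i) (take (Suc i) p)" unfolding E'_def .
    moreover have piq: "p!i \<in> q"
    proof -
      have "i < length p" using i(1) by simp
      then have "p!i \<in> set p" by (rule nth_mem)
      then show ?thesis using path_in_V[OF tree that(1) Fq] by blast
    qed
    ultimately have c1: "p!i \<in> C" unfolding C_def by blast
    have tp2: "is_path E F (p!Suc i) (take (Suc (Suc i)) p)" using path_take[OF that(1)] i by simp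
    have "p!Suc i \<notin> C"
    proof
      assume "p!Suc i \<in> C"
      from inC_avoid[OF this tp2, of i] i show False by simp
    qed
    then show ?thesis using i c1 tp by blast
  qed
  obtain i2 where i2: "Suc i2 < length p2" "{p2!i2, p2!Suc i2} = e'" "p2!i2 \<in> C" "p2!Suc i2 \<notin> C"
    and tp2: "is_path E F (p2!i2) (take (Suc i2) p2)"
    using cross[OF p2 HC] by auto
  obtain k where k: "Suc k < length pFG" "{pFG!k, pFG!Suc k} = e'" "pFG!k \<in> C" "pFG!Suc k \<notin> C"
    and tpk: "is_path E F (pFG!k) (take (Suc k) pFG)"
    using cross[OF pFG GC] by auto
  have "p2!i2 \<in> {p2!i2, p2!Suc i2}" by simp
  then have "p2!i2 \<in> {pFG!k, pFG!Suc k}" unfolding i2(2) k(2) .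
  then have X: "p2!i2 = pFG!k" using i2(3) k(4) by auto
  have Xq: "p2!i2 \<in> q" using i2(3) Cq by blast
  have tk: "take (Suc i2) p2 = take (Suc k) pFG"
    using tree_unique[OF tree Fq Xq tp2] tpk X by simp
  then have "length (take (Suc i2) p2) = length (take (Suc k) pFG)" by simp
  then have ik: "i2 = k" using i2(1) k(1) by simp
  have Bout: "B1 \<notin> C \<or> B2 \<notin> C"
  proof (cases "j < i2")
    case True
    have "take (Suc i2) p2 ! j = p2 ! j" "take (Suc i2) p2 ! Suc j = p2 ! Suc j"
      "take (Suc k) pFG ! j = pFG ! j" "take (Suc k) pFG ! Suc j = pFG ! Suc j"
      using True ik by simp_all
    then have "p2!j = pFG!j" "p2!Suc j = pFG!Suc j" using tk by metis+
    then have "label (pFG!j) (pFG!Suc j) \<subseteq> S" using LS B1_def B2_def by simp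
    moreover have "Suc j < length pFG" using True ik k by simp
    ultimately show ?thesis using attFG[OF pFG] by blast
  next
    case False
    show ?thesis
    proof (cases "j = i2")
      case True then show ?thesis using i2 B2_def by simp
    next
      case False
      then have ji: "i2 < j" using \<open>\<not> j < i2\<close> by simp
      have tj: "is_path E F B1 (take (Suc j) p2)" using path_take[OF p2] j B1_def by simp
      have "B1 \<notin> C"
      proof
        assume "B1 \<in> C"
        from inC_avoid[OF this tj, of i2] ji j i2 show False by simp
      qed
      then show ?thesis by simp
    qed
  qed
  have sep: "x \<in> label A1 A2"
    if K1C: "K1 \<in> C" and K2q: "K2 \<in> q" and K2C: "K2 \<notin> C" and xK1: "x \<in> vars K1"
      and xK2: "x \<in> vars K2" for K1 K2 x
  proof -
    have K1q: "K1 \<in> q" using K1C Cq by blast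
    obtain r where r: "is_path E K1 K2 r" using tree_exists[OF tree K1q K2q] by blast
    have allx: "\<And>H'. H' \<in> set r \<Longrightarrow> x \<in> vars H'" using jv[OF K1q K2q r xK1 xK2] by blast
    show ?thesis
    proof (cases "\<exists>m. Suc m < length r \<and> {r!m, r!Suc m} = e'")
      case True
      then obtain m where m: "Suc m < length r" "{r!m, r!Suc m} = e'" by blast
      have "r!m \<in> set r" "r!Suc m \<in> set r" using m(1) by simp_all
      then have xm: "x \<in> vars (r!m)" "x \<in> vars (r!Suc m)" using allx by blast+
      have "A1 \<in> {r!m, r!Suc m}" "A2 \<in> {r!m, r!Suc m}" using m(2) e'_def by simp_all
      then have "x \<in> vars A1" "x \<in> vars A2" using xm by blast+
      then show ?thesis unfolding label_def by blast
    next
      case False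
      then have "\<forall>m. Suc m < length r \<longrightarrow> {r!m, r!Suc m} \<noteq> e'" by blast
      from path_remove[OF r this] have r': "is_path E' K1 K2 r" unfolding E'_def .
      obtain r0 where r0: "is_path E' F K1 r0" using K1C unfolding C_def by blast
      obtain r1 where "is_path E' F K2 r1" using path_concat[OF r0 r'] by blast
      then have "K2 \<in> C" using K2q unfolding C_def by blast
      then show ?thesis using K2C by blast
    qed
  qed
  have claim: "x \<in> T0" if "x \<in> S0" "K2 \<in> q" "K2 \<notin> C" "x \<in> vars K2" for x K2
  proof -
    have "x \<in> fd_closure (FD sig (q - {F})) (key sig F) \<Longrightarrow> K2 \<in> q \<Longrightarrow> K2 \<notin> C \<Longrightarrow> x \<in> vars K2 \<Longrightarrow> x \<in> T0"
    proof (induction arbitrary: K2 rule: fd_closure.induct)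
      case (base x)
      have "x \<in> vars F" using subsetD[OF key_sub_vars base(1)] .
      then have "x \<in> label A1 A2" using sep[OF FC base(2,3)] base(4) by blast
      then show ?case using LT T_T0 by blast
    next
      case (step A B y)
      obtain K where K: "K \<in> q" "K \<noteq> F" "A = key sig K" "B = vars K"
        using step(1) unfolding FD_def by blast
      show ?case
      proof (cases "K \<in> C")
        case True
        have "y \<in> vars K" using step(3) K(4) by simp
        then have "y \<in> label A1 A2" using sep[OF True step(5,6)] step(7) by blast
        then show ?thesis using LT T_T0 by blast
      next
        case False
        have kT: "key sig K \<subseteq> T0"
        proof
          fix a assume a: "a \<in> key sig K"
          show "a \<in> T0" using subsetD[OF key_sub_vars a] step(4)[of a K] a K(1,3) False by blast
        qed
        have "key sig K \<subseteq> S0" using step(2) K(3) unfolding S0_def by blast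
        then have "K \<noteq> G" using keyG by blast
        then have "(key sig K, vars K) \<in> FD sig (q - {G})" using K unfolding FD_def by blast
        moreover have "y \<in> vars K" using step(3) K(4) by simp
        ultimately show ?thesis using kT fd_closure.step[of "key sig K" "vars K" "FD sig (q - {G})"]
          unfolding T0_def by blast
      qed
    qed
    then show ?thesis using that unfolding S0_def by blast
  qed
  have LnT: "\<not> label B1 B2 \<subseteq> T"
  proof -
    have "\<exists>m. Suc m < length pGH \<and> {pGH!m, pGH!Suc m} = e"
    proof (rule ccontr)
      assume nm: "\<not> ?thesis"
      have "\<forall>m. Suc m < length pGH \<longrightarrow> {pGH!m, pGH!Suc m} \<noteq> e" using nm by blast
      from path_remove[OF pGH this] have a1: "is_path (E - {e}) G H pGH" .
      have "\<forall>m. Suc m < length pFG \<longrightarrow> {pFG!m, pFG!Suc m} \<noteq> e"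
      proof (intro allI impI notI)
        fix m assume m: "Suc m < length pFG" "{pFG!m, pFG!Suc m} = e"
        have "{pFG!m, pFG!Suc m} = {B1, B2}" using m(2) e_def by simp
        then have "label (pFG!m) (pFG!Suc m) = label B1 B2" by (rule label_eq)
        then show False using attFG[OF pFG m(1)] LS by simp
      qed
      from path_remove[OF pFG this] have a2: "is_path (E - {e}) F G pFG" .
      obtain r where r: "is_path (E - {e}) F H r" using path_concat[OF a2 a1] by blast
      have "r = p2" using tree_unique[OF tree Fq Hq path_mono[OF r] p2] by blast
      then have "is_path (E - {e}) F H p2" using r by simp
      from path_avoid[OF this j] show False using e_def B1_def B2_def by simp
    qed
    then obtain m where m: "Suc m < length pGH" "{pGH!m, pGH!Suc m} = e" by blast
    have "{pGH!m, pGH!Suc m} = {B1, B2}" using m(2) e_def by simp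
    then have "label (pGH!m) (pGH!Suc m) = label B1 B2" by (rule label_eq)
    then show ?thesis using attGH[OF pGH m(1)] by simp
  qed
  obtain B where B: "B \<in> {B1, B2}" "B \<notin> C" using Bout by blast
  have "p2!j \<in> set p2" "p2!Suc j \<in> set p2" using j by simp_all
  then have "B1 \<in> q" "B2 \<in> q" using path_in_V[OF tree p2 Fq] B1_def B2_def by blast+
  then have Bq: "B \<in> q" using B(1) by blast
  have "label B1 B2 \<subseteq> T"
  proof
    fix x assume x: "x \<in> label B1 B2"
    then have xS: "x \<in> S0" using LS S_S0 by blast
    have xB: "x \<in> vars B" using x B unfolding label_def by blast
    have "x \<in> T0" using claim[OF xS Bq B(2) xB] .
    then show "x \<in> T" using xB varsq[OF Bq] unfolding T_def' by blast
  qed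
  then show False using LnT by blast
qed

lemma cycle_nth:
  assumes "is_cycle att cs" "i < length cs"
  shows "att (cs ! i) (cs ! (Suc i mod length cs))"
  using assms unfolding is_cycle_def by blast

theorem lemma6:
  fixes sig :: "'r signature" and q :: "('r, 'v, 'c) atom set"
    and E :: "('r, 'v, 'c) atom set set"
  assumes "bcq sig q"
    and "join_tree q E"
    and "\<forall>cs. is_cycle (attacks sig q E) cs \<longrightarrow> terminal_cycle (attacks sig q E) cs"
  shows "\<forall>cs. is_cycle (attacks sig q E) cs \<longrightarrow> length cs = 2"
proof (intro allI impI)
  fix cs assume cyc: "is_cycle (attacks sig q E) cs"
  define att where "att = attacks sig q E"
  have cyc': "is_cycle att cs" using cyc att_def by simp
  have trm: "\<And>cs. is_cycle att cs \<Longrightarrow> terminal_cycle att cs" using assms(3) att_def by simp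
  have neq: "\<And>F G. att F G \<Longrightarrow> F \<noteq> G \<and> F \<in> q \<and> G \<in> q" unfolding att_def attacks_def by blast
  have ne: "cs \<noteq> []" and dist: "distinct cs" using cyc' unfolding is_cycle_def by blast+
  show "length cs = 2"
  proof (rule ccontr)
    assume n2: "length cs \<noteq> 2"
    show False
    proof (cases "length cs = 1")
      case True
      have "att (cs ! 0) (cs ! (Suc 0 mod length cs))" using cycle_nth[OF cyc'] True by simp
      then have "att (cs ! 0) (cs ! 0)" using True by simp
      then show False using neq by blast
    next
      case False
      moreover have "length cs \<noteq> 0" using ne by simp
      ultimately have "length cs \<ge> 3" using n2 by linarith
      then obtain a b c rest where cs: "cs = a # b # c # rest"
        by (metis Suc_le_length_iff numeral_3_eq_3)
      define m where "m = length cs"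
      have m: "m = Suc (Suc (Suc (length rest)))" using cs m_def by simp
      have ab: "att a b" using cycle_nth[OF cyc', of 0] cs by simp
      have bc: "att b c" using cycle_nth[OF cyc', of 1] cs by simp
      have dabc: "a \<noteq> b" "b \<noteq> c" "a \<noteq> c" "b \<notin> set rest" "a \<notin> set rest" "c \<notin> set rest"
        "distinct rest"
        using dist cs by auto
      have "att a c \<or> att b a"
      proof (rule ccontr)
        assume h: "\<not> (att a c \<or> att b a)"
        have "attacks sig q E b a"
          using key_lemma[OF assms(2), of a b c sig] neq[OF ab] neq[OF bc] dabc ab bc h
          unfolding att_def by blast
        then show False using h att_def by simp
      qed
      then show False
      proof
        assume ba: "att b a"
        have "is_cycle att [a, b]"
          unfolding is_cycle_def using ab ba dabc by (auto simp: less_Suc_eq)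
        then have "terminal_cycle att [a, b]" by (rule trm)
        then have "c \<in> set [a, b]" using bc unfolding terminal_cycle_def by auto
        then show False using dabc by auto
      next
        assume ac: "att a c"
        define cs' where "cs' = a # c # rest"
        have len': "length cs' = Suc (Suc (length rest))" using cs'_def by simp
        have "\<forall>i < length cs'. att (cs' ! i) (cs' ! (Suc i mod length cs'))"
        proof (intro allI impI)
          fix i assume i: "i < length cs'"
          show "att (cs' ! i) (cs' ! (Suc i mod length cs'))"
          proof (cases i)
            case 0 then show ?thesis using ac cs'_def by simp
          next
            case (Suc l)
            have e: "att (cs ! Suc i) (cs ! (Suc (Suc i) mod length cs))"
              using cycle_nth[OF cyc', of "Suc i"] i len' cs by simp
            have c1: "cs ! Suc i = cs' ! i" using Suc cs cs'_def by simp
            have "cs ! (Suc (Suc i) mod length cs) = cs' ! (Suc i mod length cs')"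
            proof (cases "Suc i < length cs'")
              case True
              then show ?thesis using cs cs'_def Suc by simp
            next
              case False
              then have "Suc i = length cs'" using i by simp
              then show ?thesis using cs cs'_def by simp
            qed
            then show ?thesis using e c1 by simp
          qed
        qed
        moreover have "distinct cs'" using dabc cs'_def by simp
        ultimately have "is_cycle att cs'" unfolding is_cycle_def cs'_def by simp
        then have "terminal_cycle att cs'" by (rule trm)
        then have "b \<in> set cs'" using ab cs'_def unfolding terminal_cycle_def by auto
        then show False using dabc cs'_def by auto
      qed
    qed
  qed
qed

end
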